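(* Let $K\in K(2^{\mathbb{N}})$ be pseudo-tall. Then the ideal $\mathcal{I}_K$ has a Borel selector if and only if $K$ has a Borel pseudo-selector.
   Context: $K(2^{\mathbb{N}})$ is the hyperspace of closed subsets of $2^{\mathbb{N}}$; subsets of $\mathbb{N}$ are identified with elements of $2^{\mathbb{N}}$. $\downarrow K=\{x:\exists y\in K\ x\subseteq y\}$. $K$ is pseudo-tall if every infinite $x\subseteq\mathbb{N}$ has an infinite subset in $\downarrow K$. $\mathcal{I}_K$ is the ideal generated by $K$: $x\in\mathcal{I}_K$ iff $x\subseteq y_0\cup\dots\cup y_{n-1}$ for some $y_0,\dots,y_{n-1}\in K$. A Borel selector for a tall family $\mathcal{C}$ is a Borel $S:2^{\mathbb{N}}\to2^{\mathbb{N}}$ with $S(x)\subseteq x$, $S(x)\in\mathcal{C}$, and $S(x)$ infinite whenever $x$ is infinite. A Borel pseudo-selector for $K$ is a Borel $S:2^{\mathbb{N}}\to2^{\mathbb{N}}$ with $S(x)\subseteq x$, $S(x)\in\downarrow K$, and $S(x)$ infinite whenever $x$ is infinite. *)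

theory Defs
  imports "HOL-Analysis.Analysis"
begin

text \<open>Subsets of nat are identified with points of the Cantor space 2^N,
  represented as nat \<Rightarrow> bool with the product topology of discrete bool.\<close>

definition down :: "(nat \<Rightarrow> bool) set \<Rightarrow> (nat \<Rightarrow> bool) set" where
  "down K = {x. \<exists>y\<in>K. x \<le> y}"

definition pseudo_tall :: "(nat \<Rightarrow> bool) set \<Rightarrow> bool" where
  "pseudo_tall K \<longleftrightarrow> (\<forall>x. infinite {n. x n} \<longrightarrow>
      (\<exists>z. z \<le> x \<and> infinite {n. z n} \<and> z \<in> down K))"

definition ideal_gen :: "(nat \<Rightarrow> bool) set \<Rightarrow> (nat \<Rightarrow> bool) set" where
  "ideal_gen K = {x. \<exists>ys. set ys \<subseteq> K \<and> x \<le> foldr sup ys bot}"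

definition borel_selector :: "(nat \<Rightarrow> bool) set \<Rightarrow> ((nat \<Rightarrow> bool) \<Rightarrow> (nat \<Rightarrow> bool)) \<Rightarrow> bool" where
  "borel_selector C S \<longleftrightarrow> S \<in> borel_measurable borel \<and>
     (\<forall>x. S x \<le> x \<and> S x \<in> C \<and> (infinite {n. x n} \<longrightarrow> infinite {n. S x n}))"

definition borel_pseudo_selector :: "(nat \<Rightarrow> bool) set \<Rightarrow> ((nat \<Rightarrow> bool) \<Rightarrow> (nat \<Rightarrow> bool)) \<Rightarrow> bool" where
  "borel_pseudo_selector K S \<longleftrightarrow> S \<in> borel_measurable borel \<and>
     (\<forall>x. S x \<le> x \<and> S x \<in> down K \<and> (infinite {n. x n} \<longrightarrow> infinite {n. S x n}))"

end

theory Submission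
  imports Defs
begin

instance bool :: second_countable_topology
proof
  have "open = generate_topology (Pow (UNIV::bool set))"
    by (rule ext) (auto intro: generate_topology.Basis simp: open_discrete)
  then show "\<exists>B::bool set set. countable B \<and> open = generate_topology B"
    by (intro exI[of _ "Pow UNIV"]) simp
qed

lemma cUNIV: "compact (UNIV :: (nat \<Rightarrow> bool) set)"
proof -
  have "compact_space (product_topology (\<lambda>i::nat. (euclidean::bool topology)) UNIV)"
    by (rule compact_space_product_topology[THEN iffD2]) (auto simp: compact_space_def finite_imp_compact)
  then show ?thesis by (simp add: euclidean_product_topology compact_space_def)
qed

lemma bool_haus: "(x::bool) \<noteq> y \<Longrightarrow> \<exists>U V. open U \<and> open V \<and> x \<in> U \<and> y \<in> V \<and> U \<inter> V = {}"
  by (rule exI[of _ "{x}"], rule exI[of _ "{y}"]) (simp add: open_discrete)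
lemma haus_bool: "Hausdorff_space (euclidean :: bool topology)"
  unfolding Hausdorff_space_def disjnt_def by (metis bool_haus open_openin)

lemma hausd: "Hausdorff_space (euclidean :: (nat \<Rightarrow> bool) topology)"
proof -
  have "Hausdorff_space (product_topology (\<lambda>i::nat. (euclidean::bool topology)) UNIV)"
    by (rule Hausdorff_space_product_topology[THEN iffD2]) (simp add: haus_bool)
  then show ?thesis by (simp only: euclidean_product_topology)
qed

lemma compact_closed: "compact (A :: (nat \<Rightarrow> bool) set) \<Longrightarrow> closed A"
  by (metis closed_closedin compactin_euclidean_iff compactin_imp_closedin hausd)

lemma tendsto_fun:
  fixes f :: "'a \<Rightarrow> nat \<Rightarrow> bool"
  assumes "\<And>i. ((\<lambda>c. f c i) \<longlongrightarrow> l i) F"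
  shows "(f \<longlongrightarrow> l) F"
proof -
  have "limitin (product_topology (\<lambda>i::nat. (euclidean::bool topology)) UNIV) f l F"
    using assms by (simp add: limitin_componentwise)
  then show ?thesis by (simp add: euclidean_product_topology)
qed

lemma closed_bool_pre:
  fixes f :: "'a::topological_space \<Rightarrow> bool"
  assumes "continuous_on UNIV f"
  shows "closed {x. P (f x)}"
proof -
  have "closed (UNIV \<inter> f -` {b. P b})"
    by (rule continuous_closed_preimage[OF assms]) (simp_all add: finite_imp_closed)
  then show ?thesis by (simp add: vimage_def)
qed

lemma open_bool_pre:
  fixes f :: "'a::topological_space \<Rightarrow> bool"
  assumes "continuous_on UNIV f"
  shows "open {x. P (f x)}"
proof -
  have "closed {x. \<not> P (f x)}" by (rule closed_bool_pre[OF assms])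
  then show ?thesis by (simp add: closed_def Compl_eq)
qed

lemma cont_coord: "continuous_on UNIV (\<lambda>x::nat\<Rightarrow>bool. x i)" by simp

lemma cont_fst_coord: "continuous_on UNIV (\<lambda>p::(nat\<Rightarrow>bool)\<times>(nat\<Rightarrow>bool). fst p i)"
proof -
  have c: "continuous_on UNIV (\<lambda>p::(nat\<Rightarrow>bool)\<times>(nat\<Rightarrow>bool). fst p)"
    using continuous_on_fst[OF continuous_on_id'[of UNIV]] by simp
  show ?thesis by (rule continuous_on_product_then_coordinatewise[OF c])
qed

lemma cont_snd_coord: "continuous_on UNIV (\<lambda>p::(nat\<Rightarrow>bool)\<times>(nat\<Rightarrow>bool). snd p i)"
proof -
  have c: "continuous_on UNIV (\<lambda>p::(nat\<Rightarrow>bool)\<times>(nat\<Rightarrow>bool). snd p)"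
    using continuous_on_snd[OF continuous_on_id'[of UNIV]] by simp
  show ?thesis by (rule continuous_on_product_then_coordinatewise[OF c])
qed

lemma bool_meas:
  fixes f :: "'a \<Rightarrow> bool"
  assumes "{x\<in>space M. f x} \<in> sets M"
  shows "f \<in> borel_measurable M"
proof -
  have eq: "(borel_measurable M :: ('a \<Rightarrow> bool) set) = measurable M (count_space UNIV)"
    by (rule measurable_cong_sets[OF refl sets_borel_eq_count_space])
  have c: "{x\<in>space M. \<not> f x} \<in> sets M"
  proof -
    have "space M - {x\<in>space M. f x} = {x\<in>space M. \<not> f x}" by auto
    then show ?thesis using sets.compl_sets[OF assms] by simp
  qed
  have "f -` {a} \<inter> space M \<in> sets M" for a
    by (cases a) (use assms c in \<open>auto simp: vimage_def Int_def conj_commute\<close>)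
  then show ?thesis unfolding eq by (simp add: measurable_count_space_eq2_countable)
qed

lemma meas_pre:
  assumes "f \<in> borel_measurable borel" "A \<in> sets borel"
  shows "f -` A \<in> sets borel"
  using measurable_sets[OF assms] by simp

lemma greedy:
  fixes Phi :: "((nat\<Rightarrow>bool)\<times>(nat\<Rightarrow>bool)) set"
  assumes cl: "closed Phi"
  shows "\<exists>g. g \<in> borel_measurable borel \<and> (\<forall>z. (\<exists>w. (z,w)\<in>Phi) \<longrightarrow> (z, g z) \<in> Phi)"
proof -
  define E where "E l z \<longleftrightarrow> (\<exists>w. (z,w)\<in>Phi \<and> (\<forall>k<length l. w k = l!k))" for l :: "bool list" and z
  have Eclosed: "closed {z. E l z}" for l
  proof -
    define C where "C = {p::(nat\<Rightarrow>bool)\<times>(nat\<Rightarrow>bool). \<forall>k<length l. snd p k = l!k}"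
    have Ceq: "C = (\<Inter>k\<in>{..<length l}. {p. snd p k = l!k})" by (auto simp: C_def)
    have "closed {p::(nat\<Rightarrow>bool)\<times>(nat\<Rightarrow>bool). snd p k = l!k}" for k
      by (rule closed_bool_pre[OF cont_snd_coord])
    then have "closed C" unfolding Ceq by (intro closed_INT) auto
    then have "closed (Phi \<inter> C)" using cl by auto
    moreover have "compact (UNIV :: ((nat\<Rightarrow>bool)\<times>(nat\<Rightarrow>bool)) set)"
      using compact_Times[OF cUNIV cUNIV] by simp
    ultimately have "compact (Phi \<inter> C)" using closed_Int_compact by fastforce
    then have "compact (fst ` (Phi \<inter> C))" by (intro compact_continuous_image continuous_intros)
    then have "closed (fst ` (Phi \<inter> C))" by (rule compact_closed)
    moreover have "{z. E l z} = fst ` (Phi \<inter> C)"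
    proof
      show "{z. E l z} \<subseteq> fst ` (Phi \<inter> C)"
      proof
        fix z assume "z \<in> {z. E l z}"
        then obtain w where "(z,w)\<in>Phi" "\<forall>k<length l. w k = l!k" by (auto simp: E_def)
        then have "(z,w) \<in> Phi \<inter> C" by (simp add: C_def)
        then show "z \<in> fst ` (Phi \<inter> C)" by (rule rev_image_eqI) simp
      qed
      show "fst ` (Phi \<inter> C) \<subseteq> {z. E l z}"
        unfolding E_def C_def by auto
    qed
    ultimately show ?thesis by simp
  qed
  define pre where "pre z = rec_nat [] (\<lambda>m l. l @ [E (l @ [True]) z])" for z
  have pre0: "pre z 0 = []" for z by (simp add: pre_def)
  have preS: "pre z (Suc m) = pre z m @ [E (pre z m @ [True]) z]" for z m by (simp add: pre_def)
  define g where "g z m = pre z (Suc m) ! m" for z m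
  have len: "length (pre z m) = m" for z m by (induction m) (simp_all add: pre0 preS)
  have pref: "k < m \<Longrightarrow> pre z m ! k = g z k" for z m k
    by (induction m) (auto simp: preS g_def nth_append len less_Suc_eq)
  have inv: "E (pre z m) z" if ex: "\<exists>w. (z,w)\<in>Phi" for z m
  proof (induction m)
    case 0 thus ?case using ex by (simp add: pre0 E_def)
  next
    case (Suc m)
    show ?case
    proof (cases "E (pre z m @ [True]) z")
      case True then show ?thesis by (simp add: preS)
    next
      case False
      from Suc obtain w where w: "(z,w)\<in>Phi" "\<forall>k<m. w k = pre z m ! k" by (auto simp: E_def len)
      have "\<not> w m"
      proof
        assume "w m"
        then have "E (pre z m @ [True]) z" unfolding E_def using w
          by (auto simp: nth_append len less_Suc_eq intro!: exI[of _ w])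
        with False show False by simp
      qed
      then show ?thesis using w False
        by (auto simp: preS E_def nth_append len less_Suc_eq intro!: exI[of _ w])
    qed
  qed
  have meas_pre: "{z. pre z m = l} \<in> sets borel" for m l
  proof (induction m arbitrary: l)
    case 0 show ?case by (cases "l = []") (simp_all add: pre0)
  next
    case (Suc m)
    have eq: "{z. pre z (Suc m) = l} = (\<Union>l0\<in>UNIV. {z. pre z m = l0} \<inter> {z. l0 @ [E (l0@[True]) z] = l})"
      by (auto simp: preS)
    have "{z. l0 @ [E (l0@[True]) z] = l} \<in> sets borel" for l0
    proof -
      have e2: "{z. l0 @ [E (l0@[True]) z] = l} = (if l = l0@[True] then {z. E (l0@[True]) z} else {})
          \<union> (if l = l0@[False] then - {z. E (l0@[True]) z} else {})" by auto
      have "{z. E (l0@[True]) z} \<in> sets borel" using Eclosed by (rule borel_closed)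
      then show ?thesis unfolding e2 by (auto intro: borel_comp)
    qed
    then show ?case unfolding eq using Suc
      by (intro sets.countable_UN') (auto intro: sets.Int)
  qed
  have gmeas: "g \<in> borel_measurable borel"
  proof (rule measurable_coordinatewise_then_product)
    fix m
    have "{z. g z m} = (\<Union>l\<in>{l. l!m}. {z. pre z (Suc m) = l})" by (auto simp: g_def)
    then have "{z. g z m} \<in> sets borel" using meas_pre by (auto intro!: sets.countable_UN')
    then show "(\<lambda>z. g z m) \<in> borel_measurable borel" by (intro bool_meas) simp
  qed
  have mem: "(z, g z) \<in> Phi" if ex: "\<exists>w. (z,w)\<in>Phi" for z
  proof -
    have "\<forall>m. \<exists>w. (z,w)\<in>Phi \<and> (\<forall>k<m. w k = g z k)" using inv[OF ex] by (auto simp: E_def len pref)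
    then obtain W where W: "\<And>m. (z, W m) \<in> Phi" "\<And>m k. k<m \<Longrightarrow> W m k = g z k" by metis
    have "W \<longlonglongrightarrow> g z"
    proof (rule tendsto_fun)
      fix k
      have "eventually (\<lambda>m. W m k = g z k) sequentially"
        using W(2) by (auto simp: eventually_sequentially intro!: exI[of _ "Suc k"])
      then show "(\<lambda>m. W m k) \<longlonglongrightarrow> g z k" by (rule tendsto_eventually)
    qed
    then have tl: "(\<lambda>m. (z, W m)) \<longlonglongrightarrow> (z, g z)" by (intro tendsto_Pair tendsto_const)
    show ?thesis by (rule closed_sequentially[OF cl, of "\<lambda>m. (z, W m)", OF W(1) tl])
  qed
  show ?thesis
    by (rule exI[of _ g], rule conjI[OF gmeas], intro allI impI mem)
qed

lemma open_coord_set: "{w::nat\<Rightarrow>bool. w m} \<in> sets borel"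
  using open_bool_pre[OF cont_coord[of m], of "\<lambda>b. b"] by (intro borel_open) simp

lemma down_hered: "x \<le> y \<Longrightarrow> y \<in> down K \<Longrightarrow> x \<in> down K"
  unfolding down_def using order_trans by blast

lemma down_closed:
  assumes "closed K"
  shows "closed (down K)"
proof -
  define L where "L = {p::(nat\<Rightarrow>bool)\<times>(nat\<Rightarrow>bool). fst p \<le> snd p}"
  have Leq: "L = (\<Inter>n. {p. \<not> fst p n} \<union> {p. snd p n})"
    by (auto simp: L_def le_fun_def)
  have "closed ({p::(nat\<Rightarrow>bool)\<times>(nat\<Rightarrow>bool). \<not> fst p n} \<union> {p. snd p n})" for n
    by (intro closed_Un closed_bool_pre cont_fst_coord cont_snd_coord)
  then have "closed L" unfolding Leq by (intro closed_INT) auto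
  then have cl: "closed (L \<inter> (UNIV \<times> K))" using assms by (intro closed_Int closed_Times) auto
  have "compact (UNIV :: ((nat\<Rightarrow>bool)\<times>(nat\<Rightarrow>bool)) set)"
    using compact_Times[OF cUNIV cUNIV] by simp
  then have "compact (L \<inter> (UNIV \<times> K))" using cl closed_Int_compact by fastforce
  then have "compact (fst ` (L \<inter> (UNIV \<times> K)))" by (intro compact_continuous_image continuous_intros)
  then have c: "closed (fst ` (L \<inter> (UNIV \<times> K)))" by (rule compact_closed)
  have "down K = fst ` (L \<inter> (UNIV \<times> K))"
  proof
    show "down K \<subseteq> fst ` (L \<inter> (UNIV \<times> K))"
    proof
      fix x assume "x \<in> down K"
      then obtain y where "y \<in> K" "x \<le> y" by (auto simp: down_def)
      then have "(x,y) \<in> L \<inter> (UNIV \<times> K)" by (simp add: L_def)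
      then show "x \<in> fst ` (L \<inter> (UNIV \<times> K))" by (rule rev_image_eqI) simp
    qed
    show "fst ` (L \<inter> (UNIV \<times> K)) \<subseteq> down K"
    proof
      fix x assume "x \<in> fst ` (L \<inter> (UNIV \<times> K))"
      then obtain p where p: "p \<in> L" "snd p \<in> K" "x = fst p" by force
      then have "fst p \<le> snd p" by (simp add: L_def)
      then show "x \<in> down K" unfolding down_def using p by blast
    qed
  qed
  with c show ?thesis by simp
qed

lemma foldr_sup_apply: "foldr sup ys bot m \<longleftrightarrow> (\<exists>y\<in>set ys. y (m::nat))"
  by (induction ys) auto

lemma hard_dir:
  fixes K :: "(nat \<Rightarrow> bool) set"
  assumes clK: "closed K" and pt: "pseudo_tall K"
    and S: "borel_selector (ideal_gen K) S"
  shows "\<exists>S. borel_pseudo_selector K S"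
proof -
  have Smeas: "S \<in> borel_measurable borel" and Sle: "\<And>x. S x \<le> x"
    and Sid: "\<And>x. S x \<in> ideal_gen K"
    and Sinf: "\<And>x. infinite {n. x n} \<Longrightarrow> infinite {n. S x n}"
    using S by (auto simp: borel_selector_def)
  have "infinite {n::nat. True}" by simp
  then obtain z0 where "z0 \<in> down K" using pt unfolding pseudo_tall_def by blast
  then have botK: "bot \<in> down K" by (rule down_hered[rotated]) simp
  have dcl: "closed (down K)" by (rule down_closed[OF clK])
  define piece where "piece i W = (\<lambda>m. W (prod_encode (i,m)))" for i and W :: "nat \<Rightarrow> bool"
  define Phi where "Phi n = {p::(nat\<Rightarrow>bool)\<times>(nat\<Rightarrow>bool). (\<forall>i<n. piece i (snd p) \<in> down K) \<and>
      (\<forall>m. fst p m \<longrightarrow> (\<exists>i<n. snd p (prod_encode (i,m))))}" for n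
  have clPhi: "closed (Phi n)" for n
  proof -
    have cp: "continuous_on UNIV (\<lambda>p::(nat\<Rightarrow>bool)\<times>(nat\<Rightarrow>bool). piece i (snd p))" for i
      unfolding piece_def by (intro continuous_on_coordinatewise_then_product cont_snd_coord)
    have c1: "closed {p::(nat\<Rightarrow>bool)\<times>(nat\<Rightarrow>bool). piece i (snd p) \<in> down K}" for i
      using continuous_closed_preimage[OF cp[of i] closed_UNIV dcl] by (simp add: vimage_def)
    have a: "closed {p::(nat\<Rightarrow>bool)\<times>(nat\<Rightarrow>bool). \<not> fst p m}" for m
      using closed_bool_pre[OF cont_fst_coord[of m], of Not] by simp
    have b: "closed {p::(nat\<Rightarrow>bool)\<times>(nat\<Rightarrow>bool). snd p k}" for k
      using closed_bool_pre[OF cont_snd_coord[of k], of "\<lambda>b. b"] by simp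
    have c2: "closed ({p::(nat\<Rightarrow>bool)\<times>(nat\<Rightarrow>bool). \<not> fst p m} \<union> (\<Union>i<n. {p. snd p (prod_encode (i,m))}))" for m
      by (intro closed_Un a closed_UN finite_lessThan) (simp add: b)
    have eq: "Phi n = (\<Inter>i<n. {p. piece i (snd p) \<in> down K}) \<inter>
        (\<Inter>m. {p. \<not> fst p m} \<union> (\<Union>i<n. {p. snd p (prod_encode (i,m))}))"
      unfolding Phi_def by blast
    show ?thesis unfolding eq using c1 c2 by (intro closed_Int closed_INT) auto
  qed
  have "\<forall>n. \<exists>g. g \<in> borel_measurable borel \<and> (\<forall>z. (\<exists>w. (z,w)\<in>Phi n) \<longrightarrow> (z, g z) \<in> Phi n)"
    using greedy[OF clPhi] by blast
  then obtain G where G: "\<And>n. G n \<in> borel_measurable borel"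
    "\<And>n z. (\<exists>w. (z,w)\<in>Phi n) \<Longrightarrow> (z, G n z) \<in> Phi n" by metis
  define h where "h j z = (\<lambda>m. G (fst (prod_decode j)) z (prod_encode (snd (prod_decode j), m)) \<and> z m)" for j z
  define works where "works j z \<longleftrightarrow> h j z \<in> down K \<and> infinite {m. h j z m}" for j z
  define T where "T z = (if \<exists>j. works j z then h (LEAST j. works j z) z else bot)" for z
  have hle: "h j z \<le> z" for j z by (simp add: h_def le_fun_def)
  have hmeas: "h j \<in> borel_measurable borel" for j
  proof (rule measurable_coordinatewise_then_product)
    fix m
    have "{z. h j z m} = G (fst (prod_decode j)) -` {w. w (prod_encode (snd (prod_decode j), m))} \<inter> {z. z m}"
      by (auto simp: h_def)
    also have "\<dots> \<in> sets borel"
      by (intro sets.Int meas_pre G open_coord_set)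
    finally show "(\<lambda>z. h j z m) \<in> borel_measurable borel" by (intro bool_meas) simp
  qed
  have infset: "{w::nat\<Rightarrow>bool. infinite {m. w m}} \<in> sets borel"
  proof -
    have "{w::nat\<Rightarrow>bool. infinite {m. w m}} = (\<Inter>k. \<Union>m\<in>{k..}. {w. w m})"
      by (auto simp: infinite_nat_iff_unbounded_le)
    also have "\<dots> \<in> sets borel"
    proof -
      have u: "(\<Union>m\<in>{k..}. {w::nat\<Rightarrow>bool. w m}) \<in> sets borel" for k :: nat
        by (intro sets.countable_UN') (auto simp: open_coord_set)
      show ?thesis by (intro sets.countable_INT') (auto simp: u)
    qed
    finally show ?thesis .
  qed
  have wmeas: "{z. works j z} \<in> sets borel" for j
  proof -
    have "{z. works j z} = h j -` (down K \<inter> {w. infinite {m. w m}})"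
      by (auto simp: works_def)
    also have "\<dots> \<in> sets borel"
      by (intro meas_pre hmeas sets.Int borel_closed dcl infset)
    finally show ?thesis .
  qed
  have Tchar: "T z m \<longleftrightarrow> (\<exists>j. works j z \<and> (\<forall>k<j. \<not> works k z) \<and> h j z m)" for z m
  proof
    assume Tm: "T z m"
    then have ex: "\<exists>j. works j z" by (auto simp: T_def split: if_splits)
    then have "T z = h (LEAST j. works j z) z" by (simp add: T_def)
    then show "\<exists>j. works j z \<and> (\<forall>k<j. \<not> works k z) \<and> h j z m"
      using Tm LeastI_ex[OF ex] not_less_Least by metis
  next
    assume "\<exists>j. works j z \<and> (\<forall>k<j. \<not> works k z) \<and> h j z m"
    then obtain j where j: "works j z" "\<forall>k<j. \<not> works k z" "h j z m" by blast
    have "(LEAST j. works j z) = j"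
      by (rule Least_equality) (use j in \<open>auto simp: not_less[symmetric]\<close>)
    then show "T z m" using j by (auto simp: T_def)
  qed
  have Tmeas: "T \<in> borel_measurable borel"
  proof (rule measurable_coordinatewise_then_product)
    fix m
    have "{z. T z m} = (\<Union>j. {z. works j z} \<inter> - (\<Union>k\<in>{..<j}. {z. works k z}) \<inter> {z. h j z m})"
      unfolding set_eq_iff Tchar by blast
    also have "\<dots> \<in> sets borel"
    proof -
      have "{z. works j z} \<inter> - (\<Union>k\<in>{..<j}. {z. works k z}) \<inter> {z. h j z m} \<in> sets borel" for j
      proof -
        have u: "(\<Union>k\<in>{..<j}. {z. works k z}) \<in> sets borel"
          by (intro sets.countable_UN') (auto simp: wmeas)
        have hm: "{z. h j z m} \<in> sets borel"
          using meas_pre[OF hmeas[of j] open_coord_set[of m]] by (simp add: vimage_def)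
        show ?thesis using wmeas[of j] hm borel_comp[OF u] by (intro sets.Int)
      qed
      then show ?thesis by (intro sets.countable_UN') auto
    qed
    finally show "(\<lambda>z. T z m) \<in> borel_measurable borel" by (intro bool_meas) simp
  qed
  have key: "\<exists>j. works j z" if zI: "z \<in> ideal_gen K" and zinf: "infinite {m. z m}" for z
  proof -
    obtain ys where ys: "set ys \<subseteq> K" "z \<le> foldr sup ys bot" using zI by (auto simp: ideal_gen_def)
    define n where "n = length ys"
    define W where "W p = (case prod_decode p of (i,m) \<Rightarrow> i < n \<and> (ys!i) m)" for p
    have pW: "piece i W = ys!i" if "i < n" for i
      using that by (auto simp: piece_def W_def)
    have "(z, W) \<in> Phi n"
    proof -
      have "piece i W \<in> down K" if "i < n" for i
      proof -
        have "ys!i \<in> K" using ys(1) that by (auto simp: n_def)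
        then show ?thesis unfolding pW[OF that] down_def by blast
      qed
      moreover have "\<exists>i<n. W (prod_encode (i,m))" if "z m" for m
      proof -
        have "foldr sup ys bot m" using ys(2) that by (auto simp: le_fun_def)
        then obtain y where "y \<in> set ys" "y m" by (auto simp: foldr_sup_apply)
        then obtain i where "i < n" "ys!i = y" by (auto simp: in_set_conv_nth n_def)
        then show ?thesis using \<open>y m\<close> by (auto simp: W_def)
      qed
      ultimately show ?thesis by (simp add: Phi_def)
    qed
    then have GP: "(z, G n z) \<in> Phi n" using G(2) by blast
    have sub: "{m. z m} \<subseteq> (\<Union>i<n. {m. h (prod_encode (n,i)) z m})"
    proof
      fix m assume "m \<in> {m. z m}"
      then have "z m" by simp
      then obtain i where "i < n" "G n z (prod_encode (i,m))" using GP by (auto simp: Phi_def)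
      then show "m \<in> (\<Union>i<n. {m. h (prod_encode (n,i)) z m})" using \<open>z m\<close> by (auto simp: h_def)
    qed
    have "\<exists>i<n. infinite {m. h (prod_encode (n,i)) z m}"
    proof (rule ccontr)
      assume "\<not> ?thesis"
      then have "finite (\<Union>i<n. {m. h (prod_encode (n,i)) z m})" by auto
      then have "finite {m. z m}" using sub finite_subset by blast
      with zinf show False by simp
    qed
    then obtain i where i: "i < n" "infinite {m. h (prod_encode (n,i)) z m}" by blast
    have "piece i (G n z) \<in> down K" using GP i(1) by (simp add: Phi_def)
    moreover have "h (prod_encode (n,i)) z \<le> piece i (G n z)" by (simp add: h_def piece_def le_fun_def)
    ultimately have "h (prod_encode (n,i)) z \<in> down K" by (rule down_hered[rotated])
    then show ?thesis using i(2) by (auto simp: works_def)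
  qed
  have Tle: "T z \<le> z" for z by (simp add: T_def hle)
  have Tdown: "T z \<in> down K" for z
  proof (cases "\<exists>j. works j z")
    case True
    then have "works (LEAST j. works j z) z" by (rule LeastI_ex)
    then show ?thesis using True by (simp add: T_def works_def)
  next
    case False then show ?thesis by (simp add: T_def botK)
  qed
  have Tinf: "infinite {m. T z m}" if "z \<in> ideal_gen K" "infinite {m. z m}" for z
  proof -
    have ex: "\<exists>j. works j z" by (rule key[OF that])
    then have "works (LEAST j. works j z) z" by (rule LeastI_ex)
    then show ?thesis using ex by (simp add: T_def works_def)
  qed
  have "borel_pseudo_selector K (\<lambda>x. T (S x))"
    unfolding borel_pseudo_selector_def
  proof (intro conjI allI impI)
    show "(\<lambda>x. T (S x)) \<in> borel_measurable borel" using measurable_compose[OF Smeas Tmeas] .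
  next
    fix x show "T (S x) \<le> x" using Tle[of "S x"] Sle[of x] by (rule order_trans)
  next
    fix x show "T (S x) \<in> down K" by (rule Tdown)
  next
    fix x :: "nat \<Rightarrow> bool" assume "infinite {n. x n}"
    then show "infinite {n. T (S x) n}" using Tinf[OF Sid Sinf] by blast
  qed
  then show ?thesis by blast
qed

theorem mainTheorem15:
  fixes K :: "(nat \<Rightarrow> bool) set"
  assumes "closed K" and "pseudo_tall K"
  shows "(\<exists>S. borel_selector (ideal_gen K) S) \<longleftrightarrow> (\<exists>S. borel_pseudo_selector K S)"
proof
  assume "\<exists>S. borel_selector (ideal_gen K) S"
  then obtain S where "borel_selector (ideal_gen K) S" by blast
  then show "\<exists>S. borel_pseudo_selector K S" by (rule hard_dir[OF assms])
next
  assume "\<exists>S. borel_pseudo_selector K S"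
  then obtain S where S: "borel_pseudo_selector K S" by blast
  have "down K \<subseteq> ideal_gen K"
  proof
    fix x assume "x \<in> down K"
    then obtain y where "y \<in> K" "x \<le> y" by (auto simp: down_def)
    then show "x \<in> ideal_gen K" unfolding ideal_gen_def by (intro CollectI exI[of _ "[y]"]) simp
  qed
  then have "borel_selector (ideal_gen K) S" using S
    unfolding borel_selector_def borel_pseudo_selector_def by blast
  then show "\<exists>S. borel_selector (ideal_gen K) S" by blast
qed

end
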